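(* Let $(R_j)_{j=1}^\infty$ be a sequence of positive reals with $\inf_{j\ge1}R_j>0$, and for each $d$ let ${\bf R}=(R_1,\dots,R_d)$. Let $\alpha,\beta>0$. Then each of the approximation problems $\{I_d: W_2^{\bf R}(\mathbb T^d)\to L_2(\mathbb T^d)\}_{d\in\mathbb N_+}$ and $\{I_d: W_2^{\infty}(\mathbb T^d)\to L_2(\mathbb T^d)\}_{d\in\mathbb N_+}$ is $(\alpha,\beta)$-weakly tractable if and only if ($\alpha>2$ and $\beta>0$) or ($\alpha>0$ and $\beta>1$). In particular, both problems are intractable (not weakly tractable).
   Context: $W_2^{\bf R}(\mathbb T^d)$: Hilbert space of $f\in L_2(\mathbb T^d)$ (normalized measure) with norm $\big(\sum_{{\bf k}\in\mathbb Z^d}(1+\sum_{j=1}^d|k_j|^{2R_j})|\hat f({\bf k})|^2\big)^{1/2}$. $W_2^\infty(\mathbb T^d)$: trigonometric polynomials $\sum_{{\bf k}\in\{-1,0,1\}^d}\hat f({\bf k})e^{i{\bf k}\cdot{\bf x}}$ with norm $\big(\sum_{{\bf k}\in\{-1,0,1\}^d}(1+\sum_j|k_j|)|\hat f({\bf k})|^2\big)^{1/2}$ (the space $\bigwedge_{{\bf m}\in\mathbb N_+^d}W_2^{\bf m}(\mathbb T^d)$ with sup norm). For the identity embedding $I_d:H_d\to L_2(\mathbb T^d)$ (which has norm 1), the $n$th minimal worst-case error is $e(n,d)=a_{n+1}(I_d)$, where $a_n(T)=\inf\{\|T-A\|:\operatorname{rank}A<n\}$, and the information complexity is $n(\varepsilon,d)=\min\{n\in\mathbb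 N: e(n,d)\le\varepsilon\}$ for $\varepsilon\in(0,1)$. The problem is $(\alpha,\beta)$-weakly tractable if $\lim_{\varepsilon^{-1}+d\to\infty}\frac{\ln n(\varepsilon,d)}{\varepsilon^{-\alpha}+d^\beta}=0$; weakly tractable means $(1,1)$-weakly tractable, and intractable means not weakly tractable. *)

theory Defs
  imports "HOL-Analysis.Analysis"
begin

text \<open>Frequencies k in Z^d are modelled as integer lists of length d.
  By Parseval, L_2(T^d) is identified with square-summable coefficient
  functions on Z^d, and a Fourier-weighted Hilbert space H_d with support set S
  and weight w is identified with coefficient functions c supported on S with
  finite weighted norm. The identity embedding is then c maps to c.\<close>

definition idx :: "nat \<Rightarrow> int list set" where
  "idx d = {k. length k = d}"

definition cube :: "nat \<Rightarrow> int list set" where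
  "cube d = {k. length k = d \<and> set k \<subseteq> {-1, 0, 1}}"

text \<open>Weight of W_2^R: 1 + sum_j |k_j|^(2 R_j); coordinate j (0-based) uses R j.\<close>
definition wR :: "(nat \<Rightarrow> real) \<Rightarrow> int list \<Rightarrow> real" where
  "wR R k = 1 + (\<Sum>j<length k. \<bar>real_of_int (k ! j)\<bar> powr (2 * R j))"

definition winf :: "int list \<Rightarrow> real" where
  "winf k = 1 + (\<Sum>j<length k. \<bar>real_of_int (k ! j)\<bar>)"

definition wspace :: "int list set \<Rightarrow> (int list \<Rightarrow> real) \<Rightarrow> (int list \<Rightarrow> complex) set" where
  "wspace S w = {c. (\<forall>k. k \<notin> S \<longrightarrow> c k = 0) \<and>
                    (\<lambda>k. w k * (cmod (c k))\<^sup>2) summable_on S}"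

definition wnorm :: "int list set \<Rightarrow> (int list \<Rightarrow> real) \<Rightarrow> (int list \<Rightarrow> complex) \<Rightarrow> real" where
  "wnorm S w c = sqrt (\<Sum>\<^sub>\<infinity>k\<in>S. w k * (cmod (c k))\<^sup>2)"

text \<open>L_2 norm (via Parseval, with normalized measure).\<close>
definition l2norm :: "(int list \<Rightarrow> complex) \<Rightarrow> real" where
  "l2norm f = sqrt (\<Sum>\<^sub>\<infinity>k\<in>UNIV. (cmod (f k))\<^sup>2)"

definition rank_le_ops :: "int list set \<Rightarrow> (int list \<Rightarrow> real) \<Rightarrow> nat
    \<Rightarrow> ((int list \<Rightarrow> complex) \<Rightarrow> (int list \<Rightarrow> complex)) set" where
  "rank_le_ops S w m = {A.
     (\<forall>c\<in>wspace S w. \<forall>c'\<in>wspace S w. \<forall>a b :: complex.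
        A (\<lambda>k. a * c k + b * c' k) = (\<lambda>k. a * A c k + b * A c' k)) \<and>
     (\<exists>v :: nat \<Rightarrow> int list \<Rightarrow> complex.
        (\<forall>i<m. (\<lambda>k. (cmod (v i k))\<^sup>2) summable_on UNIV) \<and>
        (\<forall>c\<in>wspace S w. \<exists>a :: nat \<Rightarrow> complex. A c = (\<lambda>k. \<Sum>i<m. a i * v i k)))}"

definition err_norm :: "int list set \<Rightarrow> (int list \<Rightarrow> real)
    \<Rightarrow> ((int list \<Rightarrow> complex) \<Rightarrow> (int list \<Rightarrow> complex)) \<Rightarrow> ereal" where
  "err_norm S w A = (SUP c\<in>{c\<in>wspace S w. wnorm S w c \<le> 1}.
                       ereal (l2norm (\<lambda>k. c k - A c k)))"

definition approx_num :: "int list set \<Rightarrow> (int list \<Rightarrow> real) \<Rightarrow> nat \<Rightarrow> ereal" where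
  "approx_num S w n = (INF A\<in>rank_le_ops S w (n - 1). err_norm S w A)"

definition min_err :: "int list set \<Rightarrow> (int list \<Rightarrow> real) \<Rightarrow> nat \<Rightarrow> ereal" where
  "min_err S w n = approx_num S w (Suc n)"

definition eR :: "(nat \<Rightarrow> real) \<Rightarrow> nat \<Rightarrow> nat \<Rightarrow> ereal" where
  "eR R n d = min_err (idx d) (wR R) n"

definition einf :: "nat \<Rightarrow> nat \<Rightarrow> ereal" where
  "einf n d = min_err (cube d) winf n"

definition info_compl :: "(nat \<Rightarrow> nat \<Rightarrow> ereal) \<Rightarrow> real \<Rightarrow> nat \<Rightarrow> nat" where
  "info_compl e \<epsilon> d = (LEAST n. e n d \<le> ereal \<epsilon>)"

definition ab_weakly_tractable :: "(nat \<Rightarrow> nat \<Rightarrow> ereal) \<Rightarrow> real \<Rightarrow> real \<Rightarrow> bool" where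
  "ab_weakly_tractable e \<alpha> \<beta> \<longleftrightarrow>
     (\<forall>\<delta>>0. \<exists>M. \<forall>\<epsilon> d. 0 < \<epsilon> \<and> \<epsilon> < 1 \<and> 1 \<le> d \<and> 1 / \<epsilon> + real d > M \<longrightarrow>
        \<bar>ln (real (info_compl e \<epsilon> d)) / (\<epsilon> powr (- \<alpha>) + real d powr \<beta>)\<bar> < \<delta>)"

definition weakly_tractable :: "(nat \<Rightarrow> nat \<Rightarrow> ereal) \<Rightarrow> bool" where
  "weakly_tractable e \<longleftrightarrow> ab_weakly_tractable e 1 1"

end

theory Submission
  imports Defs "HOL-Real_Asymp.Real_Asymp" "HOL-Library.Function_Algebras"
begin



definition csc :: "complex \<Rightarrow> (int list \<Rightarrow> complex) \<Rightarrow> (int list \<Rightarrow> complex)" where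
 "csc a f = (\<lambda>k. a * f k)"

interpretation cf: vector_space csc
  by unfold_locales (auto simp: csc_def algebra_simps)

lemma sum_app: "(\<Sum>x\<in>G. f x) (k::'b) = (\<Sum>x\<in>G. f x k)"
  by (induction G rule: infinite_finite_induct) auto

lemma wspace_fin:
  assumes "finite F" "F \<subseteq> S" "\<forall>k. k \<notin> F \<longrightarrow> c k = 0"
  shows "c \<in> wspace S w"
  unfolding wspace_def
proof (intro CollectI conjI)
  show "\<forall>k. k \<notin> S \<longrightarrow> c k = 0" using assms by auto
  have "{k\<in>S. w k * (cmod (c k))\<^sup>2 \<noteq> 0} \<subseteq> F" using assms by auto
  then have "finite {k\<in>S. w k * (cmod (c k))\<^sup>2 \<noteq> 0}" using assms(1) finite_subset by blast
  then show "(\<lambda>k. w k * (cmod (c k))\<^sup>2) summable_on S"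
    by (rule finite_nonzero_values_imp_summable_on)
qed

lemma infsum_supp:
  assumes "finite F" "F \<subseteq> A" "\<And>k. k \<in> A - F \<Longrightarrow> f k = (0::real)"
  shows "infsum f A = sum f F"
proof -
  have "infsum f A = infsum f F"
    by (rule infsum_cong_neutral) (use assms in auto)
  then show ?thesis using assms(1) by (simp add: infsum_finite)
qed

lemma min_err_eq: "min_err S w n = (INF A\<in>rank_le_ops S w n. err_norm S w A)"
  by (simp add: min_err_def approx_num_def)

lemma upper:
  assumes w1: "\<forall>k\<in>S. 1 \<le> w k" and t: "t > 0" and fin: "finite {k\<in>S. w k < t}"
    and cardF: "card {k\<in>S. w k < t} \<le> n"
  shows "min_err S w n \<le> ereal (1 / sqrt t)"
proof -
  define F where "F = {k\<in>S. w k < t}"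
  have finF: "finite F" using fin F_def by simp
  obtain f where f: "bij_betw f {0..<card F} F" using ex_bij_betw_nat_finite[OF finF] by blast
  define A where "A = (\<lambda>c::int list \<Rightarrow> complex. \<lambda>k. if k \<in> F then c k else 0)"
  define v where "v = (\<lambda>i::nat. \<lambda>k. if i < card F \<and> k = f i then (1::complex) else 0)"
  have rep: "A c = (\<lambda>k. \<Sum>i<n. (if i < card F then c (f i) else 0) * v i k)" for c
  proof
    fix k
    have "(\<Sum>i<n. (if i < card F then c (f i) else 0) * v i k)
        = (\<Sum>i\<in>{0..<card F}. c (f i) * (if k = f i then 1 else 0))"
      using cardF unfolding F_def[symmetric]
      by (intro sum.mono_neutral_cong_right) (auto simp: v_def)
    also have "\<dots> = (\<Sum>x\<in>F. c x * (if k = x then 1 else 0))"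
      using sum.reindex_bij_betw[OF f, of "\<lambda>x. c x * (if k = x then 1 else 0)"] by simp
    also have "\<dots> = (\<Sum>x\<in>F. if k = x then c k else 0)"
      by (intro sum.cong) auto
    also have "\<dots> = A c k" using finF by (simp add: A_def)
    finally show "A c k = (\<Sum>i<n. (if i < card F then c (f i) else 0) * v i k)" by simp
  qed
  have "A \<in> rank_le_ops S w n"
    unfolding rank_le_ops_def
  proof (intro CollectI conjI exI[of _ v] ballI allI impI)
    show "A (\<lambda>k. a * c k + b * c' k) = (\<lambda>k. a * A c k + b * A c' k)" for c c' a b
      by (auto simp: A_def)
    show "(\<lambda>k. (cmod (v i k))\<^sup>2) summable_on UNIV" for i
      by (rule finite_nonzero_values_imp_summable_on)
         (rule finite_subset[of _ "{f i}"], auto simp: v_def split: if_splits)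
    show "\<exists>a. A c = (\<lambda>k. \<Sum>i<n. a i * v i k)" for c
      using rep[of c] by (intro exI[of _ "\<lambda>i. if i < card F then c (f i) else 0"])
  qed
  moreover have "err_norm S w A \<le> ereal (1 / sqrt t)"
    unfolding err_norm_def
  proof (rule SUP_least)
    fix c assume "c \<in> {c \<in> wspace S w. wnorm S w c \<le> 1}"
    then have cw: "c \<in> wspace S w" and cn: "wnorm S w c \<le> 1" by auto
    have c0: "\<And>k. k \<notin> S \<Longrightarrow> c k = 0" and hs: "(\<lambda>k. w k * (cmod (c k))\<^sup>2) summable_on S"
      using cw by (auto simp: wspace_def)
    define g where "g = (\<lambda>k. (cmod (c k - A c k))\<^sup>2)"
    have g1: "infsum g UNIV = infsum g S"
      by (rule infsum_cong_neutral) (auto simp: g_def A_def c0)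
    have gle: "g k \<le> w k * (cmod (c k))\<^sup>2 * (1 / t)" if "k \<in> S" for k
    proof (cases "k \<in> F")
      case True
      have "0 \<le> w k" using w1 that by force
      then show ?thesis using True t by (simp add: g_def A_def)
    next
      case False
      then have "w k \<ge> t" using that F_def by auto
      then have "(cmod (c k))\<^sup>2 * t \<le> (cmod (c k))\<^sup>2 * w k" by (simp add: mult_left_mono)
      then show ?thesis using False t by (simp add: g_def A_def field_simps)
    qed
    have hs2: "(\<lambda>k. w k * (cmod (c k))\<^sup>2 * (1 / t)) summable_on S"
      by (rule summable_on_cmult_left[OF hs])
    have gs: "g summable_on S"
      by (rule summable_on_comparison_test[OF hs2]) (use gle in \<open>auto simp: g_def\<close>)
    have "infsum g S \<le> infsum (\<lambda>k. w k * (cmod (c k))\<^sup>2 * (1 / t)) S"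
      by (rule infsum_mono[OF gs hs2 gle])
    also have "\<dots> = infsum (\<lambda>k. w k * (cmod (c k))\<^sup>2) S * (1 / t)"
      by (rule infsum_cmult_left) (use hs in auto)
    also have "\<dots> \<le> 1 * (1 / t)"
    proof -
      have "sqrt (infsum (\<lambda>k. w k * (cmod (c k))\<^sup>2) S) \<le> 1" using cn by (simp add: wnorm_def)
      then have "infsum (\<lambda>k. w k * (cmod (c k))\<^sup>2) S \<le> 1" by simp
      then show ?thesis using t by (intro mult_right_mono) auto
    qed
    finally have "infsum g UNIV \<le> 1 / t" using g1 by simp
    then have "sqrt (infsum g UNIV) \<le> sqrt (1 / t)" by (rule real_sqrt_le_mono)
    then show "ereal (l2norm (\<lambda>k. c k - A c k)) \<le> ereal (1 / sqrt t)"
      by (simp add: l2norm_def g_def real_sqrt_divide)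
  qed
  ultimately show ?thesis unfolding min_err_eq
    by (meson INF_lower order_trans)
qed




lemma kernel:
  assumes A: "A \<in> rank_le_ops S w n" and finF: "finite F" and FS: "F \<subseteq> S" and nF: "n < card F"
  shows "\<exists>c. (\<forall>k. k \<notin> F \<longrightarrow> c k = 0) \<and> c \<noteq> (\<lambda>k. 0) \<and> A c = (\<lambda>k. 0)"
proof -
  have lin: "\<And>c c' a b. c \<in> wspace S w \<Longrightarrow> c' \<in> wspace S w \<Longrightarrow>
      A (\<lambda>k. a * c k + b * c' k) = (\<lambda>k. a * A c k + b * A c' k)"
    using A by (auto simp: rank_le_ops_def)
  obtain v where rep: "\<forall>c\<in>wspace S w. \<exists>a :: nat \<Rightarrow> complex. A c = (\<lambda>k. \<Sum>i<n. a i * v i k)"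
    using A unfolding rank_le_ops_def by blast
  define e where "e = (\<lambda>k0::int list. \<lambda>k. if k = k0 then (1::complex) else 0)"
  have ew: "e k0 \<in> wspace S w" if "k0 \<in> F" for k0
    by (rule wspace_fin[of "{k0}"]) (use that FS in \<open>auto simp: e_def\<close>)
  have finsupp: "c \<in> wspace S w" if "\<forall>k. k \<notin> F \<longrightarrow> c k = 0" for c
    by (rule wspace_fin[OF finF FS that])
  have sumlin: "A (\<Sum>k\<in>G. csc (b k) (e k)) = (\<Sum>k\<in>G. csc (b k) (A (e k)))" if "G \<subseteq> F" for G b
  proof -
    have "finite G" using that finF finite_subset by blast
    then show ?thesis using that
    proof (induction G rule: finite_induct)
      case empty
      obtain k0 where "k0 \<in> F" using nF by (metis card.empty ex_in_conv not_less0)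
      have "A (\<lambda>k. 0 * e k0 k + 0 * e k0 k) = (\<lambda>k. 0 * A (e k0) k + 0 * A (e k0) k)"
        using lin ew[OF \<open>k0 \<in> F\<close>] by blast
      then show ?case by (simp add: zero_fun_def)
    next
      case (insert x G)
      have s: "(\<Sum>k\<in>G. csc (b k) (e k)) \<in> wspace S w"
        using insert.prems by (intro finsupp) (auto simp: sum_app csc_def e_def intro!: sum.neutral)
      have "A (\<Sum>k\<in>insert x G. csc (b k) (e k))
          = A (\<lambda>k. b x * e x k + 1 * (\<Sum>k\<in>G. csc (b k) (e k)) k)"
        using insert by (simp add: csc_def plus_fun_def)
      also have "\<dots> = (\<lambda>k. b x * A (e x) k + 1 * A (\<Sum>k\<in>G. csc (b k) (e k)) k)"
        using lin[OF ew s] insert.prems by blast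
      also have "\<dots> = (\<Sum>k\<in>insert x G. csc (b k) (A (e k)))"
        using insert by (simp add: csc_def plus_fun_def)
      finally show ?case .
    qed
  qed
  show ?thesis
  proof (cases "inj_on (\<lambda>k. A (e k)) F")
    case False
    then obtain k1 k2 where k: "k1 \<in> F" "k2 \<in> F" "k1 \<noteq> k2" "A (e k1) = A (e k2)"
      unfolding inj_on_def by blast
    define c where "c = (\<lambda>k. 1 * e k1 k + (-1) * e k2 k)"
    have "A c = (\<lambda>k. 1 * A (e k1) k + (-1) * A (e k2) k)"
      unfolding c_def using lin ew k by blast
    then have "A c = (\<lambda>k. 0)" using k by simp
    moreover have "c k1 \<noteq> 0" using k by (simp add: c_def e_def)
    moreover have "\<forall>k. k \<notin> F \<longrightarrow> c k = 0" using k by (auto simp: c_def e_def)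
    ultimately show ?thesis by (metis)
  next
    case True
    define X where "X = (\<lambda>k. A (e k)) ` F"
    have cX: "card X = card F" using True by (simp add: X_def card_image)
    have Xsp: "X \<subseteq> cf.span (v ` {..<n})"
    proof
      fix x assume "x \<in> X"
      then obtain k where k: "k \<in> F" "x = A (e k)" by (auto simp: X_def)
      obtain a where a: "A (e k) = (\<lambda>k'. \<Sum>i<n. a i * v i k')" using rep ew[OF k(1)] by blast
      have "x = (\<Sum>i<n. csc (a i) (v i))"
        using k a by (simp add: fun_eq_iff sum_app csc_def)
      also have "\<dots> \<in> cf.span (v ` {..<n})"
        by (intro cf.span_sum cf.span_scale cf.span_base) auto
      finally show "x \<in> cf.span (v ` {..<n})" .
    qed
    have "cf.dependent X"
    proof (rule ccontr)
      assume "cf.independent X"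
      then have "card X \<le> card (v ` {..<n})"
        using cf.independent_span_bound[OF _ _ Xsp] by auto
      also have "\<dots> \<le> n" using card_image_le[of "{..<n}" v] by simp
      finally show False using cX nF by simp
    qed
    then obtain T u x0 where T: "finite T" "T \<subseteq> X" "(\<Sum>x\<in>T. csc (u x) x) = 0" and x0: "x0 \<in> T" "u x0 \<noteq> 0"
      unfolding cf.dependent_explicit by blast
    obtain k0 where k0: "k0 \<in> F" "A (e k0) = x0" using x0 T X_def by auto
    define G where "G = {k\<in>F. A (e k) \<in> T}"
    define c where "c = (\<Sum>k\<in>G. csc (u (A (e k))) (e k))"
    have GF: "G \<subseteq> F" by (auto simp: G_def)
    have finG: "finite G" using GF finF finite_subset by blast
    have img: "(\<lambda>k. A (e k)) ` G = T" using T(2) by (auto simp: X_def G_def)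
    have injG: "inj_on (\<lambda>k. A (e k)) G" using True GF inj_on_subset by blast
    have "A c = (\<Sum>k\<in>G. csc (u (A (e k))) (A (e k)))" by (simp add: c_def sumlin[OF GF])
    also have "\<dots> = (\<Sum>x\<in>T. csc (u x) x)"
      using sum.reindex[OF injG, of "\<lambda>x. csc (u x) x"] img by simp
    also have "\<dots> = (\<lambda>k. 0)" using T(3) by (simp add: zero_fun_def)
    finally have Ac: "A c = (\<lambda>k. 0)" .
    have k0G: "k0 \<in> G" using k0 x0 by (auto simp: G_def)
    have "c k0 = (\<Sum>k\<in>G. if k = k0 then u x0 else 0)"
      unfolding c_def sum_app using k0 by (intro sum.cong) (auto simp: csc_def e_def)
    also have "\<dots> = u x0" using k0G finG by simp
    finally have "c k0 \<noteq> 0" using x0 by simp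
    moreover have "\<forall>k. k \<notin> F \<longrightarrow> c k = 0"
      using GF by (auto simp: c_def sum_app csc_def e_def intro!: sum.neutral)
    ultimately show ?thesis using Ac by metis
  qed
qed

lemma lower:
  assumes finF: "finite F" and FS: "F \<subseteq> S" and nF: "n < card F" and wt: "\<forall>k\<in>F. w k \<le> t" and t: "t > 0"
  shows "min_err S w n \<ge> ereal (1 / sqrt t)"
  unfolding min_err_eq
proof (rule INF_greatest)
  fix A assume A: "A \<in> rank_le_ops S w n"
  have lin: "\<And>c c' a b. c \<in> wspace S w \<Longrightarrow> c' \<in> wspace S w \<Longrightarrow>
      A (\<lambda>k. a * c k + b * c' k) = (\<lambda>k. a * A c k + b * A c' k)"
    using A by (auto simp: rank_le_ops_def)
  obtain c where c: "\<forall>k. k \<notin> F \<longrightarrow> c k = 0" "c \<noteq> (\<lambda>k. 0)" "A c = (\<lambda>k. 0)"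
    using kernel[OF A finF FS nF] by blast
  have cw: "c \<in> wspace S w" by (rule wspace_fin[OF finF FS c(1)])
  define q where "q = (\<Sum>k\<in>F. (cmod (c k))\<^sup>2)"
  obtain k1 where "c k1 \<noteq> 0" using c(2) by auto
  then have k1: "k1 \<in> F" using c(1) by auto
  have "q > 0" unfolding q_def
  proof (rule sum_pos2[OF finF k1])
    show "0 < (cmod (c k1))\<^sup>2" using \<open>c k1 \<noteq> 0\<close> by simp
  qed auto
  define r where "r = 1 / sqrt (t * q)"
  have r: "r > 0" using \<open>q > 0\<close> t by (simp add: r_def)
  define c' where "c' = (\<lambda>k. complex_of_real r * c k + 0 * c k)"
  have "A c' = (\<lambda>k. complex_of_real r * A c k + 0 * A c k)" unfolding c'_def by (rule lin[OF cw cw])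
  then have Ac': "A c' = (\<lambda>k. 0)" using c(3) by simp
  have c'0: "\<forall>k. k \<notin> F \<longrightarrow> c' k = 0" using c(1) by (simp add: c'_def)
  have c'w: "c' \<in> wspace S w" by (rule wspace_fin[OF finF FS c'0])
  have sq: "(cmod (c' k))\<^sup>2 = r\<^sup>2 * (cmod (c k))\<^sup>2" for k
    using r by (simp add: c'_def norm_mult power_mult_distrib)
  have "wnorm S w c' = sqrt (\<Sum>k\<in>F. w k * (cmod (c' k))\<^sup>2)"
    unfolding wnorm_def by (subst infsum_supp[OF finF FS]) (use c'0 in auto)
  also have "\<dots> \<le> sqrt (\<Sum>k\<in>F. t * (r\<^sup>2 * (cmod (c k))\<^sup>2))"
    using wt by (intro real_sqrt_le_mono sum_mono) (auto simp: sq intro: mult_right_mono)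
  also have "\<dots> = sqrt (t * r\<^sup>2 * q)" by (simp add: q_def sum_distrib_left mult.assoc)
  also have "\<dots> = 1" using t \<open>q > 0\<close> by (simp add: r_def power_divide)
  finally have c'n: "wnorm S w c' \<le> 1" .
  have "l2norm (\<lambda>k. c' k - A c' k) = sqrt (\<Sum>k\<in>F. (cmod (c' k))\<^sup>2)"
    unfolding l2norm_def Ac' by (subst infsum_supp[OF finF]) (use c'0 in auto)
  also have "\<dots> = sqrt (r\<^sup>2 * q)" by (simp add: sq q_def sum_distrib_left)
  also have "\<dots> = 1 / sqrt t" using t \<open>q > 0\<close> by (simp add: r_def power_divide real_sqrt_divide)
  finally have "ereal (1 / sqrt t) = ereal (l2norm (\<lambda>k. c' k - A c' k))" by simp
  also have "\<dots> \<le> err_norm S w A"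
    unfolding err_norm_def by (rule SUP_upper) (use c'w c'n in auto)
  finally show "ereal (1 / sqrt t) \<le> err_norm S w A" .
qed




definition nnz :: "int list \<Rightarrow> nat" where
  "nnz k = card {j. j < length k \<and> k ! j \<noteq> 0}"

definition enc :: "nat \<Rightarrow> int list \<Rightarrow> (nat \<times> int) list" where
  "enc s k = take s (filter (\<lambda>p. snd p \<noteq> 0) (zip [0..<length k] k) @ replicate s (0, 0))"

lemma len_filter_nnz: "length (filter (\<lambda>p. snd p \<noteq> 0) (zip [0..<length k] k)) = nnz k"
  by (auto simp: length_filter_conv_card nnz_def intro!: arg_cong[where f=card])

lemma set_filter_zip: "set (filter (\<lambda>p. snd p \<noteq> 0) (zip [0..<length k] k))
    = {(j, k ! j) | j. j < length k \<and> k ! j \<noteq> 0}"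
  by (auto simp: set_zip) (metis add_0 nth_upt)

lemma enc_len: "length (enc s k) = s"
  by (simp add: enc_def)

lemma enc_nz: assumes "nnz k \<le> s"
  shows "{p \<in> set (enc s k). snd p \<noteq> 0} = {(j, k ! j) | j. j < length k \<and> k ! j \<noteq> 0}"
proof -
  let ?xs = "filter (\<lambda>p. snd p \<noteq> 0) (zip [0..<length k] k)"
  have "enc s k = ?xs @ take (s - length ?xs) (replicate s (0, 0))"
    using assms len_filter_nnz[of k] by (simp add: enc_def take_append)
  then have "set (enc s k) = set ?xs \<union> set (take (s - length ?xs) (replicate s ((0::nat), (0::int))))" by simp
  moreover have "set (take (s - length ?xs) (replicate s ((0::nat), (0::int)))) \<subseteq> {(0,0)}"
    by (auto simp: take_replicate)
  ultimately have "{p \<in> set (enc s k). snd p \<noteq> 0} = {p \<in> set ?xs. snd p \<noteq> 0}" by auto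
  also have "\<dots> = set ?xs" by auto
  also have "\<dots> = {(j, k ! j) | j. j < length k \<and> k ! j \<noteq> 0}" by (rule set_filter_zip)
  finally show ?thesis .
qed

lemma enc_inj:
  assumes "length k = d" "length k' = d" "nnz k \<le> s" "nnz k' \<le> s" "enc s k = enc s k'"
  shows "k = k'"
proof (rule nth_equalityI)
  show "length k = length k'" using assms by simp
  have eq: "{(j, k ! j) | j. j < d \<and> k ! j \<noteq> 0} = {(j, k' ! j) | j. j < d \<and> k' ! j \<noteq> 0}"
    using enc_nz[OF assms(3)] enc_nz[OF assms(4)] assms by simp
  fix i assume i: "i < length k"
  show "k ! i = k' ! i"
  proof (cases "k ! i = 0 \<and> k' ! i = 0")
    case True then show ?thesis by simp
  next
    case False
    then have "k ! i \<noteq> 0 \<or> k' ! i \<noteq> 0" by simp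
    then show ?thesis
    proof
      assume nz: "k ! i \<noteq> 0"
      have "(i, k ! i) \<in> {(j, k ! j) | j. j < d \<and> k ! j \<noteq> 0}" using i assms(1) nz by blast
      then have "(i, k ! i) \<in> {(j, k' ! j) | j. j < d \<and> k' ! j \<noteq> 0}" by (simp only: eq)
      then obtain j where "(i, k ! i) = (j, k' ! j)" by blast
      then show ?thesis by auto
    next
      assume nz: "k' ! i \<noteq> 0"
      have "(i, k' ! i) \<in> {(j, k' ! j) | j. j < d \<and> k' ! j \<noteq> 0}" using i assms(1) nz by blast
      then have "(i, k' ! i) \<in> {(j, k ! j) | j. j < d \<and> k ! j \<noteq> 0}" by (simp only: eq)
      then obtain j where "(i, k' ! i) = (j, k ! j)" by blast
      then show ?thesis by auto
    qed
  qed
qed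

lemma enc_set:
  assumes "length k = d" "d \<ge> 1" "set k \<subseteq> {-M..M}" "M \<ge> 0"
  shows "set (enc s k) \<subseteq> {0..<d} \<times> {-M..M}"
proof -
  have "set (enc s k) \<subseteq> set (filter (\<lambda>p. snd p \<noteq> 0) (zip [0..<length k] k) @ replicate s (0, 0))"
    unfolding enc_def by (rule set_take_subset)
  also have "\<dots> \<subseteq> {0..<d} \<times> {-M..M}"
    using assms by (auto simp: set_zip)
  finally show ?thesis .
qed

lemma count_B:
  assumes "A \<subseteq> {k. length k = d \<and> set k \<subseteq> {-M..M} \<and> nnz k \<le> s}" "d \<ge> 1" "M \<ge> 0"
  shows "card A \<le> (d * nat (2 * M + 1)) ^ s"
proof -
  let ?T = "{xs. set xs \<subseteq> {0..<d} \<times> {-M..M} \<and> length xs = s}"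
  have fP: "finite ({0..<d} \<times> {-M..M})" by (intro finite_cartesian_product) auto
  have fT: "finite ?T" using finite_lists_length_eq[OF fP, of s] by (simp only: conj_commute)
  have inj: "inj_on (enc s) A"
  proof (rule inj_onI)
    fix x y assume "x \<in> A" "y \<in> A" "enc s x = enc s y"
    then have "length x = d" "length y = d" "nnz x \<le> s" "nnz y \<le> s" using assms(1) by auto
    then show "x = y" using enc_inj \<open>enc s x = enc s y\<close> by metis
  qed
  have sub: "enc s ` A \<subseteq> ?T"
  proof
    fix x assume "x \<in> enc s ` A"
    then obtain k where k: "k \<in> A" "x = enc s k" by blast
    then have "length k = d" "set k \<subseteq> {-M..M}" using assms(1) by auto
    then have "set x \<subseteq> {0..<d} \<times> {-M..M}" using k enc_set[OF _ assms(2) _ assms(3)] by simp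
    then show "x \<in> ?T" using k enc_len by simp
  qed
  have "card A = card (enc s ` A)" using inj by (rule card_image[symmetric])
  also have "\<dots> \<le> card ?T" using sub by (rule card_mono[OF fT])
  also have "card ?T = (card ({0..<d} \<times> {-M..M})) ^ s"
    by (rule card_lists_length_eq[OF fP])
  also have "card ({0..<d} \<times> {-M..M}) = d * nat (2 * M + 1)"
    by (simp only: card_cartesian_product) simp
  finally show ?thesis .
qed




lemma wR_ge1: assumes "\<forall>j. R j > 0" shows "1 \<le> wR R k"
  unfolding wR_def by (simp add: sum_nonneg)

lemma winf_ge1: "1 \<le> winf k"
  unfolding winf_def by (simp add: sum_nonneg)

lemma nnz_le: assumes "\<forall>j. R j > 0" shows "1 + real (nnz k) \<le> wR R k"
proof -
  have "real (nnz k) = (\<Sum>j<length k. if k ! j \<noteq> 0 then 1 else 0)"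
  proof -
    have "{j. j < length k \<and> k ! j \<noteq> 0} = {j\<in>{..<length k}. k ! j \<noteq> 0}" by auto
    then have "nnz k = card {j\<in>{..<length k}. k ! j \<noteq> 0}" by (simp add: nnz_def)
    also have "\<dots> = (\<Sum>j\<in>{j\<in>{..<length k}. k ! j \<noteq> 0}. 1)" by simp
    finally have "real (nnz k) = (\<Sum>j\<in>{j\<in>{..<length k}. k ! j \<noteq> 0}. (1::real))" by simp
    also have "\<dots> = (\<Sum>j<length k. if k ! j \<noteq> 0 then 1 else 0)"
      by (rule sum.inter_filter) simp
    finally show ?thesis .
  qed
  also have "\<dots> \<le> (\<Sum>j<length k. \<bar>real_of_int (k ! j)\<bar> powr (2 * R j))"
  proof (rule sum_mono)
    fix j assume "j \<in> {..<length k}"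
    show "(if k ! j \<noteq> 0 then 1 else 0) \<le> \<bar>real_of_int (k ! j)\<bar> powr (2 * R j)"
    proof (cases "k ! j = 0")
      case False
      then have "1 \<le> \<bar>real_of_int (k ! j)\<bar>" by linarith
      then show ?thesis using False assms ge_one_powr_ge_zero[of "\<bar>real_of_int (k ! j)\<bar>" "2 * R j"]
        by (simp add: less_imp_le)
    qed simp
  qed
  finally show ?thesis unfolding wR_def by simp
qed

lemma entry_bound:
  assumes R: "\<forall>j. R j > 0" and r: "r > 0" "\<forall>j. r \<le> R j" and t: "t > 0"
    and k: "wR R k < t" and j: "j < length k"
  shows "\<bar>k ! j\<bar> \<le> \<lfloor>t powr (1 / (2 * r))\<rfloor>"
proof (cases "k ! j = 0")
  case True then show ?thesis using t by simp
next
  case False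
  let ?x = "\<bar>real_of_int (k ! j)\<bar>"
  have x1: "1 \<le> ?x" using False by linarith
  have "?x powr (2 * R j) \<le> (\<Sum>j<length k. \<bar>real_of_int (k ! j)\<bar> powr (2 * R j))"
    by (rule member_le_sum[of j "{..<length k}" "\<lambda>j. \<bar>real_of_int (k ! j)\<bar> powr (2 * R j)"]) (use j in auto)
  also have "\<dots> < t" using k unfolding wR_def by simp
  finally have a: "?x powr (2 * R j) < t" .
  have "?x powr (2 * r) \<le> ?x powr (2 * R j)"
    using x1 r by (intro powr_mono) auto
  with a have b: "?x powr (2 * r) < t" by simp
  have "?x = (?x powr (2 * r)) powr (1 / (2 * r))"
    using r x1 by (simp add: powr_powr)
  also have "\<dots> < t powr (1 / (2 * r))"
    using b r by (intro powr_less_mono2) auto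
  finally have "?x < t powr (1 / (2 * r))" .
  then show ?thesis by (simp add: le_floor_iff)
qed

definition FR :: "(nat \<Rightarrow> real) \<Rightarrow> real \<Rightarrow> nat \<Rightarrow> int list set" where
  "FR R t d = {k \<in> idx d. wR R k < t}"

lemma FR_sub:
  assumes R: "\<forall>j. R j > 0" and r: "r > 0" "\<forall>j. r \<le> R j" and t: "t > 0"
  shows "FR R t d \<subseteq> {k. length k = d \<and> set k \<subseteq> {-\<lfloor>t powr (1 / (2 * r))\<rfloor>..\<lfloor>t powr (1 / (2 * r))\<rfloor>}
                        \<and> nnz k \<le> nat \<lfloor>t\<rfloor>}"
proof
  fix k assume "k \<in> FR R t d"
  then have k: "length k = d" "wR R k < t" by (auto simp: FR_def idx_def)
  have "set k \<subseteq> {-\<lfloor>t powr (1 / (2 * r))\<rfloor>..\<lfloor>t powr (1 / (2 * r))\<rfloor>}"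
  proof
    fix x assume "x \<in> set k"
    then obtain j where "j < length k" "x = k ! j" by (auto simp: in_set_conv_nth)
    then show "x \<in> {-\<lfloor>t powr (1 / (2 * r))\<rfloor>..\<lfloor>t powr (1 / (2 * r))\<rfloor>}"
      using entry_bound[OF R r t k(2)] by force
  qed
  moreover have "nnz k \<le> nat \<lfloor>t\<rfloor>"
  proof -
    have "real (nnz k) < t" using nnz_le[OF R, of k] k(2) by simp
    then show ?thesis by linarith
  qed
  ultimately show "k \<in> {k. length k = d \<and> set k \<subseteq> {-\<lfloor>t powr (1 / (2 * r))\<rfloor>..\<lfloor>t powr (1 / (2 * r))\<rfloor>}
                        \<and> nnz k \<le> nat \<lfloor>t\<rfloor>}" using k by simp
qed

lemma FR_fin_cards:
  assumes R: "\<forall>j. R j > 0" and r: "r > 0" "\<forall>j. r \<le> R j" and t: "t > 0" and d: "d \<ge> 1"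
  defines "M \<equiv> \<lfloor>t powr (1 / (2 * r))\<rfloor>"
  shows "finite (FR R t d)" "card (FR R t d) \<le> (nat (2 * M + 1)) ^ d"
    "card (FR R t d) \<le> (d * nat (2 * M + 1)) ^ nat \<lfloor>t\<rfloor>"
proof -
  have sub: "FR R t d \<subseteq> {k. length k = d \<and> set k \<subseteq> {-M..M} \<and> nnz k \<le> nat \<lfloor>t\<rfloor>}"
    using FR_sub[OF R r t] unfolding M_def .
  have M0: "M \<ge> 0" unfolding M_def using t by simp
  have sub2: "FR R t d \<subseteq> {xs. set xs \<subseteq> {-M..M} \<and> length xs = d}" using sub by auto
  have fL: "finite {xs. set xs \<subseteq> {-M..M} \<and> length xs = d}"
    by (rule finite_lists_length_eq) simp
  show "finite (FR R t d)" using finite_subset[OF sub2 fL] .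
  have "card (FR R t d) \<le> card {xs. set xs \<subseteq> {-M..M} \<and> length xs = d}"
    by (rule card_mono[OF fL sub2])
  also have "\<dots> = (card {-M..M}) ^ d" by (rule card_lists_length_eq) simp
  also have "\<dots> = (nat (2 * M + 1)) ^ d" by simp
  finally show "card (FR R t d) \<le> (nat (2 * M + 1)) ^ d" .
  show "card (FR R t d) \<le> (d * nat (2 * M + 1)) ^ nat \<lfloor>t\<rfloor>"
    by (rule count_B[OF sub d M0])
qed

lemma zero_in_FR: assumes "t > 1" shows "replicate d 0 \<in> FR R t d"
  using assms by (simp add: FR_def idx_def wR_def)

lemma cube_sub: "cube d \<subseteq> idx d" by (auto simp: cube_def idx_def)

lemma wR_cube: assumes "k \<in> cube d" shows "wR R k = winf k"
proof -
  have "\<bar>real_of_int (k ! j)\<bar> powr (2 * R j) = \<bar>real_of_int (k ! j)\<bar>" if "j < length k" for j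
  proof -
    have "k ! j \<in> {-1, 0, 1}" using assms that nth_mem by (auto simp: cube_def)
    then show ?thesis by auto
  qed
  then show ?thesis unfolding wR_def winf_def by simp
qed

lemma winf_cube_le: assumes "k \<in> cube d" shows "winf k \<le> 1 + real d"
proof -
  have "(\<Sum>j<length k. \<bar>real_of_int (k ! j)\<bar>) \<le> (\<Sum>j<length k. 1)"
  proof (rule sum_mono)
    fix j assume "j \<in> {..<length k}"
    then have "k ! j \<in> {-1, 0, 1}" using assms nth_mem by (auto simp: cube_def)
    then show "\<bar>real_of_int (k ! j)\<bar> \<le> 1" by auto
  qed
  then show ?thesis using assms by (simp add: winf_def cube_def)
qed

lemma card_cube: "finite (cube d)" "card (cube d) = 3 ^ d"
proof -
  have e: "cube d = {xs. set xs \<subseteq> {-1, 0, 1} \<and> length xs = d}" by (auto simp: cube_def)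
  show "finite (cube d)" unfolding e by (rule finite_lists_length_eq) simp
  show "card (cube d) = 3 ^ d" unfolding e by (subst card_lists_length_eq) (simp_all add: numeral_3_eq_3)
qed




lemma info_le: "e n d \<le> ereal \<epsilon> \<Longrightarrow> info_compl e \<epsilon> d \<le> n"
  unfolding info_compl_def by (rule Least_le)

lemma info_ge:
  assumes "e m d \<le> ereal \<epsilon>" "\<forall>n<N. \<not> e n d \<le> ereal \<epsilon>"
  shows "N \<le> info_compl e \<epsilon> d"
proof (rule ccontr)
  assume "\<not> N \<le> info_compl e \<epsilon> d"
  moreover have "e (info_compl e \<epsilon> d) d \<le> ereal \<epsilon>"
    unfolding info_compl_def by (rule LeastI[of _ m]) (rule assms(1))
  ultimately show False using assms(2) by auto
qed

lemma sqrt_inv_sq: "\<epsilon> > 0 \<Longrightarrow> 1 / sqrt (1 / \<epsilon>\<^sup>2) = (\<epsilon>::real)"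
  by (simp add: real_sqrt_divide)

lemma eR_upper:
  assumes R: "\<forall>j. R j > 0" and e: "\<epsilon> > 0" and fin: "finite (FR R (1 / \<epsilon>\<^sup>2) d)"
  shows "eR R (card (FR R (1 / \<epsilon>\<^sup>2) d)) d \<le> ereal \<epsilon>"
proof -
  have "eR R (card (FR R (1 / \<epsilon>\<^sup>2) d)) d \<le> ereal (1 / sqrt (1 / \<epsilon>\<^sup>2))"
    unfolding eR_def
    by (rule upper) (use wR_ge1[OF R] e fin in \<open>auto simp: FR_def\<close>)
  then show ?thesis using sqrt_inv_sq[OF e] by simp
qed

lemma einf_upper:
  assumes R: "\<forall>j. R j > 0" and e: "\<epsilon> > 0" and fin: "finite (FR R (1 / \<epsilon>\<^sup>2) d)"
  shows "einf (card (FR R (1 / \<epsilon>\<^sup>2) d)) d \<le> ereal \<epsilon>"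
proof -
  have sub: "{k \<in> cube d. winf k < 1 / \<epsilon>\<^sup>2} \<subseteq> FR R (1 / \<epsilon>\<^sup>2) d"
    using cube_sub wR_cube by (fastforce simp: FR_def)
  have "einf (card (FR R (1 / \<epsilon>\<^sup>2) d)) d \<le> ereal (1 / sqrt (1 / \<epsilon>\<^sup>2))"
    unfolding einf_def
  proof (rule upper)
    show "\<forall>k\<in>cube d. 1 \<le> winf k" using winf_ge1 by simp
    show "finite {k \<in> cube d. winf k < 1 / \<epsilon>\<^sup>2}" using finite_subset[OF sub fin] .
    show "card {k \<in> cube d. winf k < 1 / \<epsilon>\<^sup>2} \<le> card (FR R (1 / \<epsilon>\<^sup>2) d)"
      by (rule card_mono[OF fin sub])
  qed (use e in auto)
  then show ?thesis using sqrt_inv_sq[OF e] by simp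
qed

lemma lower_cube:
  assumes "S = cube d \<or> S = idx d" "\<forall>k\<in>cube d. w k = winf k" "n < 3 ^ d"
  shows "min_err S w n \<ge> ereal (1 / sqrt (1 + real d))"
proof -
  have sub: "cube d \<subseteq> S" using assms(1) cube_sub[of d] by auto
  show ?thesis
    by (rule lower[of "cube d"]) (use assms sub card_cube winf_cube_le in auto)
qed

lemma info_lower_cube:
  assumes R: "\<forall>j. R j > 0" and r: "r > 0" "\<forall>j. r \<le> R j" and d: "d \<ge> 1"
    and E: "E = eR R \<or> E = einf"
  shows "3 ^ d \<le> info_compl E (1 / sqrt (real d + 2)) d"
proof -
  define \<epsilon> where "\<epsilon> = 1 / sqrt (real d + 2)"
  have e: "\<epsilon> > 0" by (simp add: \<epsilon>_def)
  have t: "1 / \<epsilon>\<^sup>2 > 0" using e by simp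
  have fin: "finite (FR R (1 / \<epsilon>\<^sup>2) d)" using FR_fin_cards(1)[OF R r t d] .
  have ex: "E (card (FR R (1 / \<epsilon>\<^sup>2) d)) d \<le> ereal \<epsilon>"
    using E eR_upper[OF R e fin] einf_upper[OF R e fin] by auto
  have lt: "ereal \<epsilon> < ereal (1 / sqrt (1 + real d))"
    unfolding \<epsilon>_def by (simp add: divide_strict_left_mono)
  have "\<not> E n d \<le> ereal \<epsilon>" if "n < 3 ^ d" for n
  proof -
    have "E n d \<ge> ereal (1 / sqrt (1 + real d))"
      using E
    proof
      assume "E = eR R"
      then show ?thesis unfolding eR_def min_err_def[symmetric]
        using lower_cube[of "idx d" d "wR R" n] wR_cube that by (simp add: min_err_def)
    next
      assume "E = einf"
      then show ?thesis unfolding einf_def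
        using lower_cube[of "cube d" d winf n] that by (simp add: min_err_def)
    qed
    show ?thesis
    proof
      assume "E n d \<le> ereal \<epsilon>"
      with \<open>E n d \<ge> ereal (1 / sqrt (1 + real d))\<close> have "ereal (1 / sqrt (1 + real d)) \<le> ereal \<epsilon>"
        by (rule order_trans)
      then show False using lt by simp
    qed
  qed
  then show ?thesis unfolding \<epsilon>_def[symmetric] by (intro info_ge[of E "card (FR R (1 / \<epsilon>\<^sup>2) d)" d, OF ex]) auto
qed




lemma ln_nat_nonneg: "0 \<le> ln (real (n::nat))"
  by (cases "n = 0") auto

lemma not_wt:
  assumes R: "\<forall>j. R j > 0" and r: "r > 0" "\<forall>j. r \<le> R j"
    and a: "\<alpha> > 0" "\<alpha> \<le> 2" and b: "\<beta> > 0" "\<beta> \<le> 1"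
    and E: "E = eR R \<or> E = einf"
  shows "\<not> ab_weakly_tractable E \<alpha> \<beta>"
proof
  assume "ab_weakly_tractable E \<alpha> \<beta>"
  then obtain M where M: "\<And>\<epsilon> d. 0 < \<epsilon> \<Longrightarrow> \<epsilon> < 1 \<Longrightarrow> 1 \<le> d \<Longrightarrow> 1 / \<epsilon> + real d > M \<Longrightarrow>
        \<bar>ln (real (info_compl E \<epsilon> d)) / (\<epsilon> powr (- \<alpha>) + real d powr \<beta>)\<bar> < 1/4"
    unfolding ab_weakly_tractable_def by (meson zero_less_divide_1_iff zero_less_numeral)
  define d where "d = nat \<lceil>max M 1\<rceil> + 1"
  have d1: "d \<ge> 1" and dM: "real d > M" unfolding d_def by linarith+
  define \<epsilon> where "\<epsilon> = 1 / sqrt (real d + 2)"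
  have e0: "\<epsilon> > 0" unfolding \<epsilon>_def by simp
  have e1: "\<epsilon> < 1" unfolding \<epsilon>_def by simp
  have "1 / \<epsilon> + real d > M" using dM e0 by (simp add: add_pos_nonneg less_le_trans)
  then have H: "\<bar>ln (real (info_compl E \<epsilon> d)) / (\<epsilon> powr (- \<alpha>) + real d powr \<beta>)\<bar> < 1/4"
    using M[OF e0 e1 d1] by blast
  have I: "3 ^ d \<le> info_compl E \<epsilon> d" unfolding \<epsilon>_def by (rule info_lower_cube[OF R r d1 E])
  have "real d * ln 3 = ln (real (3 ^ d))" by (simp add: ln_realpow)
  also have "\<dots> \<le> ln (real (info_compl E \<epsilon> d))"
  proof -
    have "(0::nat) < 3 ^ d" by simp
    then have "0 < info_compl E \<epsilon> d" using I by linarith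
    then show ?thesis using I by (subst ln_le_cancel_iff) auto
  qed
  finally have L: "real d * ln 3 \<le> ln (real (info_compl E \<epsilon> d))" .
  have "\<epsilon> powr (- \<alpha>) = sqrt (real d + 2) powr \<alpha>"
    unfolding \<epsilon>_def by (simp add: powr_minus_divide powr_divide)
  also have "\<dots> \<le> sqrt (real d + 2) powr 2"
    using a by (intro powr_mono) auto
  also have "\<dots> = real d + 2" by (simp add: powr_numeral)
  finally have u1: "\<epsilon> powr (- \<alpha>) \<le> real d + 2" .
  have "real d powr \<beta> \<le> real d powr 1" using b d1 by (intro powr_mono) auto
  then have u2: "real d powr \<beta> \<le> real d" using d1 by simp
  define u where "u = \<epsilon> powr (- \<alpha>) + real d powr \<beta>"
  have u0: "u > 0" unfolding u_def using e0 by (simp add: add_pos_nonneg)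
  have uu: "u \<le> 2 * real d + 2" using u1 u2 unfolding u_def by simp
  have "1 / 4 \<le> real d * ln 3 / u"
  proof -
    have "u \<le> 4 * real d" using uu d1 by simp
    also have "\<dots> \<le> 4 * (real d * ln 3)" using ln3_gt_1 d1 by simp
    finally show ?thesis using u0 by (simp add: field_simps)
  qed
  also have "\<dots> \<le> ln (real (info_compl E \<epsilon> d)) / u"
    using L u0 by (simp add: divide_right_mono)
  finally have "1 / 4 \<le> ln (real (info_compl E \<epsilon> d)) / u" .
  moreover have "ln (real (info_compl E \<epsilon> d)) / u \<le> \<bar>ln (real (info_compl E \<epsilon> d)) / u\<bar>" by (rule abs_ge_self)
  ultimately show False using H unfolding u_def[symmetric] by linarith
qed




lemma wt_finish:
  assumes a: "\<alpha> > 0" and b: "\<beta> > 0" and p: "p < 1"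
    and key: "\<And>\<epsilon> d. 0 < \<epsilon> \<Longrightarrow> \<epsilon> < 1 \<Longrightarrow> 1 \<le> d \<Longrightarrow>
      ln (real (info_compl E \<epsilon> d)) \<le> (\<epsilon> powr (- \<alpha>) + real d powr \<beta>) powr p *
          (c + K * ln (\<epsilon> powr (- \<alpha>) + real d powr \<beta>))"
  shows "ab_weakly_tractable E \<alpha> \<beta>"
  unfolding ab_weakly_tractable_def
proof (intro allI impI)
  fix \<delta> :: real assume \<delta>: "\<delta> > 0"
  have lim: "((\<lambda>u. u powr p * (c + K * ln u) / u) \<longlongrightarrow> 0) at_top"
    using p by real_asymp
  have "\<forall>\<^sub>F u in at_top. dist (u powr p * (c + K * ln u) / u) 0 < \<delta>"
    by (rule tendstoD[OF lim \<delta>])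
  then obtain U where U: "\<And>u. u \<ge> U \<Longrightarrow> \<bar>u powr p * (c + K * ln u) / u\<bar> < \<delta>"
    unfolding eventually_at_top_linorder by auto
  define V where "V = max U 1"
  have V1: "V \<ge> 1" and VU: "V \<ge> U" by (auto simp: V_def)
  show "\<exists>M. \<forall>\<epsilon> d. 0 < \<epsilon> \<and> \<epsilon> < 1 \<and> 1 \<le> d \<and> M < 1 / \<epsilon> + real d \<longrightarrow>
      \<bar>ln (real (info_compl E \<epsilon> d)) / (\<epsilon> powr - \<alpha> + real d powr \<beta>)\<bar> < \<delta>"
  proof (intro exI[of _ "V powr (1 / \<alpha>) + V powr (1 / \<beta>)"] allI impI, elim conjE)
    fix \<epsilon> :: real and d :: nat
    assume e0: "0 < \<epsilon>" and e1: "\<epsilon> < 1" and d1: "1 \<le> d"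
      and M: "V powr (1 / \<alpha>) + V powr (1 / \<beta>) < 1 / \<epsilon> + real d"
    define u where "u = \<epsilon> powr - \<alpha> + real d powr \<beta>"
    have ea: "\<epsilon> powr - \<alpha> = (1 / \<epsilon>) powr \<alpha>" using e0 by (simp add: powr_minus_divide powr_divide)
    have uV: "u \<ge> V"
    proof (cases "1 / \<epsilon> > V powr (1 / \<alpha>)")
      case True
      have "V = (V powr (1 / \<alpha>)) powr \<alpha>" using a V1 by (simp add: powr_powr)
      also have "\<dots> < (1 / \<epsilon>) powr \<alpha>" using True a by (intro powr_less_mono2) auto
      finally have "V < (1 / \<epsilon>) powr \<alpha>" .
      moreover have "0 \<le> real d powr \<beta>" by simp
      ultimately show ?thesis unfolding u_def ea by linarith
    next
      case False
      then have dd: "real d > V powr (1 / \<beta>)" using M by linarith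
      have "V = (V powr (1 / \<beta>)) powr \<beta>" using b V1 by (simp add: powr_powr)
      also have "\<dots> < real d powr \<beta>" using dd b by (intro powr_less_mono2) auto
      finally have "V < real d powr \<beta>" .
      moreover have "0 \<le> \<epsilon> powr - \<alpha>" by simp
      ultimately show ?thesis unfolding u_def by linarith
    qed
    then have u0: "u > 0" using V1 by simp
    have "\<bar>ln (real (info_compl E \<epsilon> d)) / u\<bar> = ln (real (info_compl E \<epsilon> d)) / u"
      using u0 ln_nat_nonneg by simp
    also have "\<dots> \<le> u powr p * (c + K * ln u) / u"
      using key[OF e0 e1 d1] u0 unfolding u_def by (simp add: divide_right_mono)
    also have "\<dots> \<le> \<bar>u powr p * (c + K * ln u) / u\<bar>" by (rule abs_ge_self)
    also have "\<dots> < \<delta>" using U uV VU by simp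
    finally show "\<bar>ln (real (info_compl E \<epsilon> d)) / (\<epsilon> powr - \<alpha> + real d powr \<beta>)\<bar> < \<delta>"
      unfolding u_def .
  qed
qed




lemma key_bound:
  assumes R: "\<forall>j. R j > 0" and r: "r > 0" "\<forall>j. r \<le> R j"
    and a: "\<alpha> > 0" and b: "\<beta> > 0" and ab: "\<alpha> > 2 \<or> \<beta> > 1"
    and E: "E = eR R \<or> E = einf"
    and p: "p = (if \<beta> > 1 then 1 / \<beta> else 2 / \<alpha>)"
    and e0: "0 < \<epsilon>" and e1: "\<epsilon> < 1" and d1: "1 \<le> d"
  shows "ln (real (info_compl E \<epsilon> d)) \<le> (\<epsilon> powr (- \<alpha>) + real d powr \<beta>) powr p *
          (ln 3 + (1 / \<beta> + 1 / (\<alpha> * r)) * ln (\<epsilon> powr (- \<alpha>) + real d powr \<beta>))"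
proof -
  define t where "t = 1 / \<epsilon>\<^sup>2"
  have "\<epsilon>\<^sup>2 < 1" using e0 e1 by (simp add: power_less_one_iff abs_less_iff)
  then have t1: "t > 1" unfolding t_def using e0 by simp
  then have t0: "t > 0" by simp
  have fin: "finite (FR R t d)" using FR_fin_cards(1)[OF R r t0 d1] .
  define C where "C = card (FR R t d)"
  have C1: "C \<ge> 1" unfolding C_def using fin zero_in_FR[OF t1, of d R]
    by (metis One_nat_def Suc_leI card_gt_0_iff empty_iff)
  have IC: "info_compl E \<epsilon> d \<le> C"
    using E eR_upper[OF R e0] einf_upper[OF R e0] fin info_le unfolding C_def t_def by metis
  have lnI: "ln (real (info_compl E \<epsilon> d)) \<le> ln (real C)"
  proof (cases "info_compl E \<epsilon> d = 0")
    case True then show ?thesis using C1 by simp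
  next
    case False then show ?thesis using IC by (subst ln_le_cancel_iff) auto
  qed
  define T where "T = t powr (1 / (2 * r))"
  define M where "M = \<lfloor>T\<rfloor>"
  have T1: "T \<ge> 1" unfolding T_def using t1 r by (intro ge_one_powr_ge_zero) auto
  have MT: "real_of_int M \<le> T" unfolding M_def by simp
  have M0: "M \<ge> 0" unfolding M_def using T1 by simp
  define Q where "Q = real (nat (2 * M + 1))"
  have Qe: "Q = 2 * real_of_int M + 1" unfolding Q_def using M0 by simp
  have Q1: "Q \<ge> 1" using Qe M0 by simp
  have lnT: "ln T = ln t / (2 * r)" unfolding T_def by simp
  have lnQ: "ln Q \<le> ln 3 + ln t / (2 * r)"
  proof -
    have "Q \<le> 3 * T" using Qe MT T1 by simp
    then have "ln Q \<le> ln (3 * T)" using Q1 by (subst ln_le_cancel_iff) auto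
    also have "\<dots> = ln 3 + ln T" using T1 by (simp add: ln_mult)
    finally show ?thesis using lnT by simp
  qed
  have lnt: "ln t = - 2 * ln \<epsilon>" unfolding t_def using e0 by (simp add: ln_div ln_realpow)
  define u where "u = \<epsilon> powr (- \<alpha>) + real d powr \<beta>"
  have ea0: "\<epsilon> powr (- \<alpha>) > 0" using e0 by simp
  have db1: "real d powr \<beta> \<ge> 1" using d1 b by (intro ge_one_powr_ge_zero) auto
  have u1: "u \<ge> 1" unfolding u_def using ea0 db1 by linarith
  have lnu0: "ln u \<ge> 0" using u1 by simp
  have eau: "\<epsilon> powr (- \<alpha>) \<le> u" unfolding u_def using db1 by linarith
  have dbu: "real d powr \<beta> \<le> u" unfolding u_def using ea0 by linarith
  have "- \<alpha> * ln \<epsilon> = ln (\<epsilon> powr (- \<alpha>))" by simp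
  also have "\<dots> \<le> ln u" using ea0 eau u1 by (subst ln_le_cancel_iff) auto
  finally have "- ln \<epsilon> \<le> ln u / \<alpha>" using a by (simp add: field_simps)
  then have lntu: "ln t / (2 * r) \<le> ln u / (\<alpha> * r)" unfolding lnt using r a
    by (simp add: field_simps)
  have "\<beta> * ln (real d) = ln (real d powr \<beta>)" by simp
  also have "\<dots> \<le> ln u" using db1 dbu u1 d1 by (subst ln_le_cancel_iff) auto
  finally have lndu: "ln (real d) \<le> ln u / \<beta>" using b by (simp add: field_simps)
  have du: "real d \<le> u powr (1 / \<beta>)"
  proof -
    have "real d = (real d powr \<beta>) powr (1 / \<beta>)" using b d1 by (simp add: powr_powr)
    also have "\<dots> \<le> u powr (1 / \<beta>)" using b db1 dbu by (intro powr_mono2) auto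
    finally show ?thesis .
  qed
  have tu: "t \<le> u powr (2 / \<alpha>)"
  proof -
    have "(\<epsilon> powr (- \<alpha>)) powr (2 / \<alpha>) = \<epsilon> powr (- 2)" using a by (simp add: powr_powr)
    also have "\<dots> = 1 / \<epsilon> powr 2" by (rule powr_minus_divide)
    also have "\<dots> = t" unfolding t_def using e0 by (simp add: powr_numeral)
    finally have "t = (\<epsilon> powr (- \<alpha>)) powr (2 / \<alpha>)" by simp
    also have "\<dots> \<le> u powr (2 / \<alpha>)" using a ea0 eau by (intro powr_mono2) auto
    finally show ?thesis .
  qed
  define K where "K = 1 / \<beta> + 1 / (\<alpha> * r)"
  have Kb: "ln u / \<beta> \<le> K * ln u" and Kr: "ln u / (\<alpha> * r) \<le> K * ln u"
    unfolding K_def using lnu0 a b r by (simp_all add: field_simps)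
  have Kbr: "ln u / \<beta> + ln u / (\<alpha> * r) = K * ln u"
    unfolding K_def by (simp add: field_simps)
  have lt0: "0 \<le> ln 3 + ln t / (2 * r)" using t1 r by simp
  show ?thesis unfolding u_def[symmetric] K_def[symmetric]
  proof (cases "\<beta> > 1")
    case True
    then have pe: "p = 1 / \<beta>" using p by simp
    have "real C \<le> Q ^ d"
      using FR_fin_cards(2)[OF R r t0 d1] unfolding C_def Q_def T_def M_def
      by (metis of_nat_le_iff of_nat_power)
    then have "ln (real C) \<le> ln (Q ^ d)" using C1 by (subst ln_le_cancel_iff) auto
    also have "\<dots> = real d * ln Q" by (simp add: ln_realpow)
    also have "\<dots> \<le> real d * (ln 3 + ln t / (2 * r))" using lnQ by (simp add: mult_left_mono)
    also have "\<dots> \<le> u powr p * (ln 3 + K * ln u)"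
      unfolding pe using du lt0 lntu Kr by (intro mult_mono) auto
    finally show "ln (real (info_compl E \<epsilon> d)) \<le> u powr p * (ln 3 + K * ln u)" using lnI by simp
  next
    case False
    then have pe: "p = 2 / \<alpha>" using p by simp
    define s where "s = nat \<lfloor>t\<rfloor>"
    have st: "real s \<le> t" unfolding s_def using t0 by simp
    have rd1: "real d \<ge> 1" using d1 by simp
    have dQ1: "real d * Q \<ge> 1" using mult_mono[OF rd1 Q1] by simp
    have "real C \<le> (real d * Q) ^ s"
      using FR_fin_cards(3)[OF R r t0 d1] unfolding C_def Q_def T_def M_def s_def
      by (metis of_nat_le_iff of_nat_power of_nat_mult)
    then have "ln (real C) \<le> ln ((real d * Q) ^ s)" using C1 by (subst ln_le_cancel_iff) auto
    also have "\<dots> = real s * (ln (real d) + ln Q)" using d1 Q1 by (simp add: ln_realpow ln_mult)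
    also have "\<dots> \<le> t * (ln (real d) + ln Q)"
      using st d1 Q1 by (intro mult_right_mono) auto
    also have "\<dots> \<le> u powr p * (ln 3 + K * ln u)"
    proof (intro mult_mono)
      show "t \<le> u powr p" using tu pe by simp
      show "ln (real d) + ln Q \<le> ln 3 + K * ln u" using lndu lnQ lntu Kbr by linarith
    qed (use d1 Q1 in auto)
    finally show "ln (real (info_compl E \<epsilon> d)) \<le> u powr p * (ln 3 + K * ln u)" using lnI by simp
  qed
qed




lemma wt_iff:
  assumes R: "\<forall>j. R j > 0" and r: "r > 0" "\<forall>j. r \<le> R j"
    and a: "\<alpha> > 0" and b: "\<beta> > 0" and E: "E = eR R \<or> E = einf"
  shows "ab_weakly_tractable E \<alpha> \<beta> \<longleftrightarrow> (\<alpha> > 2 \<and> \<beta> > 0) \<or> (\<alpha> > 0 \<and> \<beta> > 1)"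
proof (cases "\<alpha> > 2 \<or> \<beta> > 1")
  case True
  define p where "p = (if \<beta> > 1 then 1 / \<beta> else 2 / \<alpha>)"
  have p1: "p < 1" unfolding p_def using True a by auto
  have "ab_weakly_tractable E \<alpha> \<beta>"
    by (rule wt_finish[OF a b p1]) (rule key_bound[OF R r a b True E p_def])
  then show ?thesis using True a b by auto
next
  case False
  then have "\<not> ab_weakly_tractable E \<alpha> \<beta>" using not_wt[OF R r a _ b _ E] by auto
  then show ?thesis using False by auto
qed

theorem theorem2p4:
  fixes R :: "nat \<Rightarrow> real" and \<alpha> \<beta> :: real
  assumes "\<forall>j. R j > 0" and "(INF j. R j) > 0"
    and "\<alpha> > 0" and "\<beta> > 0"
  shows "(ab_weakly_tractable (eR R) \<alpha> \<beta> \<longleftrightarrow> (\<alpha> > 2 \<and> \<beta> > 0) \<or> (\<alpha> > 0 \<and> \<beta> > 1))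
       \<and> (ab_weakly_tractable einf \<alpha> \<beta> \<longleftrightarrow> (\<alpha> > 2 \<and> \<beta> > 0) \<or> (\<alpha> > 0 \<and> \<beta> > 1))
       \<and> \<not> weakly_tractable (eR R) \<and> \<not> weakly_tractable einf"
proof -
  have r: "\<forall>j. (INF j. R j) \<le> R j"
  proof
    fix j
    have "bdd_below (range R)" using assms(1) by (intro bdd_belowI[of _ 0]) (auto simp: less_imp_le)
    then show "(INF j. R j) \<le> R j" by (rule cINF_lower) simp
  qed
  note rr = assms(2) r
  show ?thesis
    using wt_iff[OF assms(1) rr assms(3,4), of "eR R"] wt_iff[OF assms(1) rr assms(3,4), of einf]
      not_wt[OF assms(1) rr, of 1 1 "eR R"] not_wt[OF assms(1) rr, of 1 1 einf]
    unfolding weakly_tractable_def by auto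
qed


end
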